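(* There exists a constant $c>0$, independent of $n$, such that for all sufficiently large $n\in16\mathbb{N}$, $$\big\|(\partial_x u_{0,n})^2\big\|_{B^0_{\infty,1}(\mathbb{N}(n))}\ge c(\log n)^2 .$$
   Context: $\mathbb{T}=\mathbb{R}/2\pi\mathbb{Z}$, $16\mathbb{N}=\{16,32,48,\dots\}$, and $\mathbb{N}(n)=\{k\in\mathbb{N}: n/8\le k\le n/4\}$. Periodic Fourier transform $\widehat u(\xi)=\int_{\mathbb{T}}e^{-\mathrm{i}x\xi}u(x)\,dx$, $\xi\in\mathbb{Z}$. Fix a smooth $\chi$ supported in the ball of radius $4/3$, equal to $1$ on the ball of radius $3/4$; $\varphi(\xi)=\chi(\xi/2)-\chi(\xi)$, $\varphi_j(\xi)=\varphi(2^{-j}\xi)$. Dyadic blocks: $\Delta_j u=0$ for $j\le-2$, $\Delta_{-1}u=\frac1{2\pi}\sum_{\xi}\chi(\xi)\widehat u(\xi)e^{\mathrm{i}x\xi}$, $\Delta_ju=\frac1{2\pi}\sum_\xi\varphi_j(\xi)\widehat u(\xi)e^{\mathrm{i}x\xi}$ for $j\ge0$; $S_ju=\sum_{-1\le k\le j-1}\Delta_ku$. For $k\in\{0,1\}$, $\|f\|_{B^k_{\infty,1}(\mathbb{N}(n))}=\sum_{j\in\mathbb{N}(n)}2^{kj}\|\Delta_jf\|_{L^\infty(\mathbb{T})}$. Let $h$ be the $2\pi$-periodic function equal to $-\tfrac12$ on $(-\pi,0)$, $\tfrac12$ on $(0,\pi)$, and $0$ at $-\pi,0,\pi$. Define $f_n=S_{n/2}h$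 and $$u_{0,n}(x)=2^{-n}n^{-2/5}\log n\cdot\cos(2^nx)\big(1+n^{-1/5}f_n(x)\big).$$ *)

theory Defs
  imports "HOL-Analysis.Analysis"
begin

definition per_fourier :: "(real \<Rightarrow> complex) \<Rightarrow> int \<Rightarrow> complex" where
  "per_fourier u \<xi> = integral {-pi..pi} (\<lambda>x. cis (- x * of_int \<xi>) * u x)"

definition admissible_chi :: "(real \<Rightarrow> real) \<Rightarrow> bool" where
  "admissible_chi chi \<longleftrightarrow>
     (\<forall>k x. ((deriv ^^ k) chi) differentiable (at x)) \<and>
     closure {x. chi x \<noteq> 0} \<subseteq> ball 0 (4/3) \<and>
     (\<forall>x \<in> ball 0 (3/4). chi x = 1)"

definition phi_lp :: "(real \<Rightarrow> real) \<Rightarrow> real \<Rightarrow> real" where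
  "phi_lp chi \<xi> = chi (\<xi> / 2) - chi \<xi>"

definition Delta :: "(real \<Rightarrow> real) \<Rightarrow> int \<Rightarrow> (real \<Rightarrow> complex) \<Rightarrow> real \<Rightarrow> complex" where
  "Delta chi j u x =
     (if j \<le> -2 then 0
      else if j = -1 then
        complex_of_real (1 / (2 * pi)) *
          infsum (\<lambda>\<xi>::int. complex_of_real (chi (of_int \<xi>)) * per_fourier u \<xi> * cis (x * of_int \<xi>)) UNIV
      else
        complex_of_real (1 / (2 * pi)) *
          infsum (\<lambda>\<xi>::int. complex_of_real (phi_lp chi (2 powr (- real_of_int j) * of_int \<xi>))
                           * per_fourier u \<xi> * cis (x * of_int \<xi>)) UNIV)"

definition S_lp :: "(real \<Rightarrow> real) \<Rightarrow> int \<Rightarrow> (real \<Rightarrow> complex) \<Rightarrow> real \<Rightarrow> complex" where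
  "S_lp chi j u x = (\<Sum>k \<in> {-1..j-1}. Delta chi k u x)"

text \<open>L-infinity norm on T (used only for continuous periodic functions, where it is the sup).\<close>
definition Linf :: "(real \<Rightarrow> complex) \<Rightarrow> real" where
  "Linf g = (SUP x \<in> {-pi..pi}. cmod (g x))"

definition Nset :: "nat \<Rightarrow> nat set" where
  "Nset n = {k. real n / 8 \<le> real k \<and> real k \<le> real n / 4}"

definition besov_trunc :: "(real \<Rightarrow> real) \<Rightarrow> nat \<Rightarrow> nat set \<Rightarrow> (real \<Rightarrow> complex) \<Rightarrow> real" where
  "besov_trunc chi k A f = (\<Sum>j \<in> A. 2 ^ (k * j) * Linf (Delta chi (int j) f))"

text \<open>h: 2pi-periodic, -1/2 on (-pi,0), 1/2 on (0,pi), 0 at multiples of pi.\<close>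
definition hsq :: "real \<Rightarrow> real" where
  "hsq x = (if x - 2 * pi * of_int \<lfloor>(x + pi) / (2 * pi)\<rfloor> \<in> {-pi<..<0} then -1/2
            else if x - 2 * pi * of_int \<lfloor>(x + pi) / (2 * pi)\<rfloor> \<in> {0<..<pi} then 1/2
            else 0)"

definition f_n :: "(real \<Rightarrow> real) \<Rightarrow> nat \<Rightarrow> real \<Rightarrow> complex" where
  "f_n chi n = S_lp chi (int (n div 2)) (\<lambda>x. complex_of_real (hsq x))"

definition u0 :: "(real \<Rightarrow> real) \<Rightarrow> nat \<Rightarrow> real \<Rightarrow> complex" where
  "u0 chi n x = complex_of_real (2 powr (- real n) * real n powr (-2/5) * ln (real n) * cos (2 ^ n * x))
              * (1 + complex_of_real (real n powr (-1/5)) * f_n chi n x)"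

end

theory Submission
  imports Defs
begin


definition tp :: "(int \<Rightarrow> complex) \<Rightarrow> int set \<Rightarrow> real \<Rightarrow> complex" where
  "tp a S x = (\<Sum>\<eta>\<in>S. a \<eta> * cis (x * of_int \<eta>))"

lemma cis_vd: "((\<lambda>x. cis (x * of_int k)) has_vector_derivative (\<i> * of_int k * cis (x * of_int k))) (at x within A)"
  unfolding has_vector_derivative_def
  by (rule has_derivative_eq_rhs, rule derivative_eq_intros | simp)+ (auto simp: algebra_simps fun_eq_iff scaleR_conv_of_real)

lemma cis_pi_int: "cis (pi * of_int k) = cis (- pi * of_int k)"
proof -
  have "sin (pi * of_int k) = 0" by (metis mult.commute sin_zero_iff_int2)
  then show ?thesis by (simp add: complex_eq_iff)
qed

lemma cis_integral: "((\<lambda>x. cis (x * of_int k)) has_integral (if k = 0 then of_real (2*pi) else 0)) {-pi..pi}"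
proof (cases "k = 0")
  case True
  then show ?thesis using has_integral_const_real[of "1::complex" "-pi" pi] by (simp add: scaleR_conv_of_real)
next
  case False
  have "((\<lambda>x. cis (x * of_int k)) has_integral
        (cis (pi * of_int k) / (\<i> * of_int k) - cis (-pi * of_int k) / (\<i> * of_int k))) {-pi..pi}"
  proof (rule fundamental_theorem_of_calculus)
    fix x assume "x \<in> {-pi..pi}"
    have "((\<lambda>x. cis (x * of_int k) / (\<i> * of_int k)) has_vector_derivative
           (\<i> * of_int k * cis (x * of_int k)) / (\<i> * of_int k)) (at x within {-pi..pi})"
      using cis_vd[of k x "{-pi..pi}"] by (rule has_vector_derivative_divide)
    then show "((\<lambda>x. cis (x * of_int k) / (\<i> * of_int k)) has_vector_derivative cis (x * of_int k))
               (at x within {-pi..pi})" using False by simp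
  qed simp
  then show ?thesis using False by (simp add: cis_pi_int)
qed

lemma tp1_integral:
  fixes a :: "int \<Rightarrow> complex"
  assumes "finite S"
  shows "((\<lambda>x. cis (x * of_int k) * tp a S x) has_integral
           (of_real (2 * pi) * (\<Sum>\<eta>\<in>S. if k + \<eta> = 0 then a \<eta> else 0))) {-pi..pi}"
proof -
  have eq: "(\<lambda>x. cis (x * of_int k) * tp a S x) = (\<lambda>x. \<Sum>\<eta>\<in>S. a \<eta> * cis (x * of_int (k + \<eta>)))"
    by (auto simp: tp_def sum_distrib_left fun_eq_iff algebra_simps cis_mult[symmetric])
  have "((\<lambda>x. \<Sum>\<eta>\<in>S. a \<eta> * cis (x * of_int (k + \<eta>))) has_integral
          (\<Sum>\<eta>\<in>S. a \<eta> * (if k + \<eta> = 0 then of_real (2*pi) else 0))) {-pi..pi}"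
    by (intro has_integral_sum assms has_integral_mult_right cis_integral)
  moreover have "(\<Sum>\<eta>\<in>S. a \<eta> * (if k + \<eta> = 0 then of_real (2*pi) else 0)) =
      of_real (2 * pi) * (\<Sum>\<eta>\<in>S. if k + \<eta> = 0 then a \<eta> else 0)"
    by (auto simp: sum_distrib_left intro!: sum.cong)
  ultimately show ?thesis by (simp add: eq)
qed

lemma tp2_integral:
  fixes a b :: "int \<Rightarrow> complex"
  assumes "finite S" "finite T"
  shows "((\<lambda>x. cis (x * of_int k) * tp a S x * tp b T x) has_integral
           (of_real (2 * pi) * (\<Sum>\<eta>\<in>S. \<Sum>\<zeta>\<in>T. if k + \<eta> + \<zeta> = 0 then a \<eta> * b \<zeta> else 0))) {-pi..pi}"
proof -
  have eq: "(\<lambda>x. cis (x * of_int k) * tp a S x * tp b T x) =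
     (\<lambda>x. \<Sum>\<eta>\<in>S. \<Sum>\<zeta>\<in>T. (a \<eta> * b \<zeta>) * cis (x * of_int (k + \<eta> + \<zeta>)))"
    by (auto simp: tp_def sum_distrib_left sum_distrib_right fun_eq_iff algebra_simps cis_mult[symmetric]
             intro!: sum.cong)
  have "((\<lambda>x. \<Sum>\<eta>\<in>S. \<Sum>\<zeta>\<in>T. (a \<eta> * b \<zeta>) * cis (x * of_int (k + \<eta> + \<zeta>))) has_integral
          (\<Sum>\<eta>\<in>S. \<Sum>\<zeta>\<in>T. (a \<eta> * b \<zeta>) * (if k + \<eta> + \<zeta> = 0 then of_real (2*pi) else 0))) {-pi..pi}"
    by (intro has_integral_sum assms has_integral_mult_right cis_integral)
  moreover have "(\<Sum>\<eta>\<in>S. \<Sum>\<zeta>\<in>T. (a \<eta> * b \<zeta>) * (if k + \<eta> + \<zeta> = 0 then of_real (2*pi) else 0)) =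
      of_real (2 * pi) * (\<Sum>\<eta>\<in>S. \<Sum>\<zeta>\<in>T. if k + \<eta> + \<zeta> = 0 then a \<eta> * b \<zeta> else 0)"
    by (auto simp: sum_distrib_left intro!: sum.cong)
  ultimately show ?thesis by (simp add: eq)
qed


lemma Linf_upper:
  assumes "continuous_on {-pi..pi} g" "x \<in> {-pi..pi}"
  shows "cmod (g x) \<le> Linf g"
proof -
  have "bounded (g ` {-pi..pi})"
    by (intro compact_imp_bounded compact_continuous_image assms) auto
  then have "bdd_above ((\<lambda>x. cmod (g x)) ` {-pi..pi})"
    using bdd_above_norm[of "g ` {-pi..pi}"] by (simp add: image_image)
  then show ?thesis unfolding Linf_def by (rule cSUP_upper[OF assms(2)])
qed

lemma linf_pair:
  assumes "continuous_on {-pi..pi} g"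
    and "((\<lambda>x. g x * w x) has_integral P) {-pi..pi}"
    and "((\<lambda>x. cmod (w x)) has_integral W) {-pi..pi}"
  shows "cmod P \<le> Linf g * W"
proof -
  have i2: "((\<lambda>x. Linf g * cmod (w x)) has_integral (Linf g * W)) {-pi..pi}"
    using has_integral_mult_right[OF assms(3)] by simp
  have "norm (integral {-pi..pi} (\<lambda>x. g x * w x)) \<le> integral {-pi..pi} (\<lambda>x. Linf g * cmod (w x))"
  proof (rule integral_norm_bound_integral)
    show "(\<lambda>x. g x * w x) integrable_on {-pi..pi}" using assms(2) by blast
    show "(\<lambda>x. Linf g * cmod (w x)) integrable_on {-pi..pi}" using i2 by blast
    fix x assume x: "x \<in> {-pi..pi}"
    show "norm (g x * w x) \<le> Linf g * cmod (w x)"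
      using Linf_upper[OF assms(1) x] by (simp add: norm_mult mult_right_mono)
  qed
  then show ?thesis using assms(2,3) i2 by (simp add: integral_unique)
qed

definition wD :: "nat \<Rightarrow> int \<Rightarrow> real \<Rightarrow> complex" where
  "wD L M x = (\<Sum>t<L. \<Sum>t'<L. cis (x * of_int (M + 2 * int t - 2 * int t'))) / of_nat L"

lemma wD_norm_integral:
  assumes "L > 0"
  shows "((\<lambda>x. cmod (wD L M x)) has_integral 2 * pi) {-pi..pi}"
proof -
  define D where "D x = (\<Sum>t<L. cis (x * of_int (2 * int t)))" for x
  have e1: "(\<Sum>t<L. \<Sum>t'<L. cis (x * of_int (M + 2 * int t - 2 * int t'))) = cis (x * of_int M) * (D x * cnj (D x))" for x
    by (simp add: D_def sum_distrib_left sum_distrib_right cis_cnj cis_mult algebra_simps) (rule sum.swap)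
  have e2: "(\<Sum>t<L. \<Sum>t'<L. cis (x * of_int (2 * int t - 2 * int t'))) = (D x * cnj (D x))" for x
    by (simp add: D_def sum_distrib_left sum_distrib_right cis_cnj cis_mult algebra_simps) (rule sum.swap)
  have nrm: "cmod (wD L M x) = Re (\<Sum>t<L. \<Sum>t'<L. cis (x * of_int (2 * int t - 2 * int t'))) / real L" for x
    unfolding wD_def e1 e2 complex_norm_square[symmetric] by (simp add: norm_divide norm_mult norm_power del: of_real_power)
  have "((\<lambda>x. \<Sum>t<L. \<Sum>t'<L. cis (x * of_int (2 * int t - 2 * int t'))) has_integral
        (\<Sum>t<L. \<Sum>t'<L. if 2 * int t - 2 * int t' = 0 then of_real (2*pi) else 0)) {-pi..pi}"
    by (intro has_integral_sum finite_lessThan cis_integral)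
  moreover have "(\<Sum>t<L. \<Sum>t'<L. if 2 * int t - 2 * int t' = 0 then of_real (2*pi) else (0::complex)) = of_real (2*pi) * of_nat L"
  proof -
    have "(\<Sum>t<L. \<Sum>t'<L. if 2 * int t - 2 * int t' = 0 then of_real (2*pi) else (0::complex))
        = (\<Sum>t<L. of_real (2*pi))"
      by (rule sum.cong) (auto simp: sum.delta)
    then show ?thesis by simp
  qed
  ultimately have "((\<lambda>x. Re (\<Sum>t<L. \<Sum>t'<L. cis (x * of_int (2 * int t - 2 * int t'))) / real L) has_integral
        Re (of_real (2*pi) * of_nat L) / real L) {-pi..pi}"
    by (intro has_integral_divide has_integral_Re) (simp add: mult.commute)
  then show ?thesis using assms by (simp add: nrm)
qed


lemma cis_integral_ab:
  assumes "k \<noteq> 0" "a \<le> b"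
  shows "((\<lambda>x. cis (x * of_int k)) has_integral
          (cis (b * of_int k) - cis (a * of_int k)) / (\<i> * of_int k)) {a..b}"
proof -
  have "((\<lambda>x. cis (x * of_int k)) has_integral
        (cis (b * of_int k) / (\<i> * of_int k) - cis (a * of_int k) / (\<i> * of_int k))) {a..b}"
  proof (rule fundamental_theorem_of_calculus[OF assms(2)])
    fix x assume "x \<in> {a..b}"
    have "((\<lambda>x. cis (x * of_int k) / (\<i> * of_int k)) has_vector_derivative
           (\<i> * of_int k * cis (x * of_int k)) / (\<i> * of_int k)) (at x within {a..b})"
      using cis_vd[of k x "{a..b}"] by (rule has_vector_derivative_divide)
    then show "((\<lambda>x. cis (x * of_int k) / (\<i> * of_int k)) has_vector_derivative cis (x * of_int k))
               (at x within {a..b})" using assms by simp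
  qed
  then show ?thesis by (simp add: diff_divide_distrib)
qed

lemma hsq_pos: "x \<in> {0<..<pi} \<Longrightarrow> hsq x = 1/2"
proof -
  assume x: "x \<in> {0<..<pi}"
  have "\<lfloor>(x + pi) / (2 * pi)\<rfloor> = 0"
    using x by (subst floor_eq_iff) (auto simp: field_simps)
  then show ?thesis using x unfolding hsq_def by auto
qed

lemma hsq_neg: "x \<in> {-pi<..<0} \<Longrightarrow> hsq x = -1/2"
proof -
  assume x: "x \<in> {-pi<..<0}"
  have "\<lfloor>(x + pi) / (2 * pi)\<rfloor> = 0"
    using x by (subst floor_eq_iff) (auto simp: field_simps)
  then show ?thesis using x unfolding hsq_def by auto
qed

lemma hsq_fourier:
  "per_fourier (\<lambda>x. complex_of_real (hsq x)) \<xi> = (if even \<xi> then 0 else - 2 * \<i> / of_int \<xi>)"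
proof -
  define k where "k = - \<xi>"
  have eqf: "(\<lambda>x. cis (- x * of_int \<xi>) * complex_of_real (hsq x)) = (\<lambda>x. cis (x * of_int k) * complex_of_real (hsq x))"
    by (simp add: k_def)
  define I1 where "I1 = (if k = 0 then of_real pi else (cis (0 * of_int k) - cis (-pi * of_int k)) / (\<i> * of_int k))"
  define I2 where "I2 = (if k = 0 then of_real pi else (cis (pi * of_int k) - cis (0 * of_int k)) / (\<i> * of_int k))"
  have h1: "((\<lambda>x. cis (x * of_int k)) has_integral I1) {-pi..0}"
  proof (cases "k = 0")
    case True then show ?thesis using has_integral_const_real[of "1::complex" "-pi" 0]
      by (simp add: I1_def scaleR_conv_of_real)
  next
    case False then show ?thesis using cis_integral_ab[OF False, of "-pi" 0] by (simp add: I1_def)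
  qed
  have h2: "((\<lambda>x. cis (x * of_int k)) has_integral I2) {0..pi}"
  proof (cases "k = 0")
    case True then show ?thesis using has_integral_const_real[of "1::complex" 0 pi]
      by (simp add: I2_def scaleR_conv_of_real)
  next
    case False then show ?thesis using cis_integral_ab[OF False, of 0 pi] by (simp add: I2_def)
  qed
  have g1: "((\<lambda>x. cis (x * of_int k) * complex_of_real (hsq x)) has_integral (- I1 / 2)) {-pi..0}"
  proof (rule has_integral_spike_finite[of "{-pi, 0}"])
    show "((\<lambda>x. cis (x * of_int k) * (-1/2)) has_integral (- I1 / 2)) {-pi..0}"
      using has_integral_mult_left[OF h1, of "-1/2"] by simp
    fix x assume "x \<in> {-pi..0} - {-pi, 0}"
    then have "x \<in> {-pi<..<0}" by auto
    then show "cis (x * of_int k) * complex_of_real (hsq x) = cis (x * of_int k) * (-1/2)"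
      by (simp add: hsq_neg)
  qed auto
  have g2: "((\<lambda>x. cis (x * of_int k) * complex_of_real (hsq x)) has_integral (I2 / 2)) {0..pi}"
  proof (rule has_integral_spike_finite[of "{0, pi}"])
    show "((\<lambda>x. cis (x * of_int k) * (1/2)) has_integral (I2 / 2)) {0..pi}"
      using has_integral_mult_left[OF h2, of "1/2"] by simp
    fix x assume "x \<in> {0..pi} - {0, pi}"
    then have "x \<in> {0<..<pi}" by auto
    then show "cis (x * of_int k) * complex_of_real (hsq x) = cis (x * of_int k) * (1/2)"
      by (simp add: hsq_pos)
  qed auto
  have "((\<lambda>x. cis (x * of_int k) * complex_of_real (hsq x)) has_integral (- I1 / 2 + I2 / 2)) {-pi..pi}"
    by (rule has_integral_combine[OF _ _ g1 g2]) auto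
  then have val: "per_fourier (\<lambda>x. complex_of_real (hsq x)) \<xi> = - I1 / 2 + I2 / 2"
    unfolding per_fourier_def eqf by (rule integral_unique)
  show ?thesis
  proof (cases "k = 0")
    case True
    then have "\<xi> = 0" by (simp add: k_def)
    with val True show ?thesis by (simp add: I1_def I2_def)
  next
    case False
    have sk: "sin (pi * of_int k) = 0" by (metis mult.commute sin_zero_iff_int2)
    have c1: "cis (pi * of_int k) = (if even k then 1 else -1)"
      using sk by (simp add: complex_eq_iff)
    have c2: "cis (- pi * of_int k) = (if even k then 1 else -1)"
      using sk by (simp add: complex_eq_iff)
    have sx: "sin (pi * of_int \<xi>) = 0" by (metis mult.commute sin_zero_iff_int2)
    have d1: "cis (pi * of_int \<xi>) = (if even \<xi> then 1 else -1)"
      using sx by (simp add: complex_eq_iff)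
    have d2: "cis (- (pi * of_int \<xi>)) = (if even \<xi> then 1 else -1)"
      using sx by (simp add: complex_eq_iff)
    show ?thesis using False
      by (auto simp: val I1_def I2_def d1 d2 field_simps k_def)
  qed
qed


lemma chi_zero:
  assumes "admissible_chi chi" "\<bar>t\<bar> \<ge> 4/3"
  shows "chi t = 0"
proof (rule ccontr)
  assume "chi t \<noteq> 0"
  then have "t \<in> closure {x. chi x \<noteq> 0}" by (meson closure_subset mem_Collect_eq subsetD)
  then have "t \<in> ball 0 (4/3)" using assms(1) unfolding admissible_chi_def by blast
  then show False using assms(2) by simp
qed

lemma chi_one:
  assumes "admissible_chi chi" "\<bar>t\<bar> < 3/4"
  shows "chi t = 1"
  using assms unfolding admissible_chi_def by auto

definition lpmult :: "(real \<Rightarrow> real) \<Rightarrow> int \<Rightarrow> int \<Rightarrow> real" where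
  "lpmult chi j \<xi> = (if j = -1 then chi (of_int \<xi>) else phi_lp chi (2 powr (- real_of_int j) * of_int \<xi>))"

lemma mult_zero:
  assumes "admissible_chi chi" "j \<ge> -1" "real_of_int \<bar>\<xi>\<bar> \<ge> 3 * 2 powr real_of_int j"
  shows "lpmult chi j \<xi> = 0"
proof (cases "j = -1")
  case True
  from assms(3) True have "real_of_int \<bar>\<xi>\<bar> \<ge> 3/2" by (simp add: powr_minus)
  then have "\<bar>real_of_int \<xi>\<bar> \<ge> 4/3" by simp
  then show ?thesis using True chi_zero[OF assms(1), of "of_int \<xi>"] by (simp add: lpmult_def)
next
  case False
  have pos: "2 powr (- real_of_int j) > 0" by simp
  have "3 = 2 powr (- real_of_int j) * (3 * 2 powr real_of_int j)" by (simp add: powr_minus field_simps)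
  also have "\<dots> \<le> 2 powr (- real_of_int j) * real_of_int \<bar>\<xi>\<bar>"
    using assms(3) pos by (intro mult_left_mono) auto
  finally have ge: "\<bar>2 powr (- real_of_int j) * of_int \<xi>\<bar> \<ge> 3" by (simp add: abs_mult)
  have "chi (2 powr (- real_of_int j) * of_int \<xi> / 2) = 0"
    by (rule chi_zero[OF assms(1)]) (use ge in auto)
  moreover have "chi (2 powr (- real_of_int j) * of_int \<xi>) = 0"
    by (rule chi_zero[OF assms(1)]) (use ge in auto)
  ultimately show ?thesis using False by (simp add: lpmult_def phi_lp_def)
qed

lemma Delta_tp:
  assumes "j \<ge> -1" "finite S" "\<And>\<xi>. \<xi> \<notin> S \<Longrightarrow> lpmult chi j \<xi> = 0"
  shows "Delta chi j u x = tp (\<lambda>\<xi>. of_real (lpmult chi j \<xi> / (2 * pi)) * per_fourier u \<xi>) S x"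
proof -
  have "Delta chi j u x = complex_of_real (1 / (2 * pi)) *
          infsum (\<lambda>\<xi>::int. complex_of_real (lpmult chi j \<xi>) * per_fourier u \<xi> * cis (x * of_int \<xi>)) UNIV"
    using assms(1) by (simp add: Delta_def lpmult_def)
  also have "infsum (\<lambda>\<xi>::int. complex_of_real (lpmult chi j \<xi>) * per_fourier u \<xi> * cis (x * of_int \<xi>)) UNIV
      = infsum (\<lambda>\<xi>::int. complex_of_real (lpmult chi j \<xi>) * per_fourier u \<xi> * cis (x * of_int \<xi>)) S"
    by (rule infsum_cong_neutral) (auto simp: assms(3))
  also have "\<dots> = (\<Sum>\<xi>\<in>S. complex_of_real (lpmult chi j \<xi>) * per_fourier u \<xi> * cis (x * of_int \<xi>))"
    using assms(2) by simp
  finally show ?thesis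
    by (simp add: tp_def sum_distrib_left algebra_simps)
qed

lemma tp_sum: "tp (\<lambda>\<xi>. \<Sum>i\<in>I. c i \<xi>) S x = (\<Sum>i\<in>I. tp (c i) S x)"
  unfolding tp_def by (simp add: sum_distrib_right) (rule sum.swap)

lemma tp_vd:
  assumes "finite S"
  shows "(tp a S has_vector_derivative tp (\<lambda>\<xi>. \<i> * of_int \<xi> * a \<xi>) S x) (at x within A)"
proof -
  have "((\<lambda>x. \<Sum>\<eta>\<in>S. a \<eta> * cis (x * of_int \<eta>)) has_vector_derivative
         (\<Sum>\<eta>\<in>S. a \<eta> * (\<i> * of_int \<eta> * cis (x * of_int \<eta>)))) (at x within A)"
    by (intro has_vector_derivative_sum has_vector_derivative_mult_right cis_vd)
  then show ?thesis unfolding tp_def[abs_def] by (simp add: algebra_simps)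
qed

lemma tp_cont: "continuous_on A (tp a S)"
  unfolding tp_def[abs_def] by (intro continuous_intros)

lemma tp_wD_integral:
  assumes "finite S"
  shows "((\<lambda>x. tp c S x * wD L M x) has_integral
     (of_real (2 * pi) / of_nat L * (\<Sum>t<L. \<Sum>t'<L.
        if - (M + 2 * int t - 2 * int t') \<in> S then c (- (M + 2 * int t - 2 * int t')) else 0))) {-pi..pi}"
proof -
  have eq: "(\<lambda>x. tp c S x * wD L M x) =
     (\<lambda>x. (\<Sum>t<L. \<Sum>t'<L. cis (x * of_int (M + 2 * int t - 2 * int t')) * tp c S x) / of_nat L)"
    by (auto simp: wD_def fun_eq_iff sum_distrib_left sum_distrib_right algebra_simps)
  have "((\<lambda>x. (\<Sum>t<L. \<Sum>t'<L. cis (x * of_int (M + 2 * int t - 2 * int t')) * tp c S x) / of_nat L)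
     has_integral (\<Sum>t<L. \<Sum>t'<L. of_real (2 * pi) *
        (\<Sum>\<eta>\<in>S. if (M + 2 * int t - 2 * int t') + \<eta> = 0 then c \<eta> else 0)) / of_nat L) {-pi..pi}"
    by (intro has_integral_divide has_integral_sum finite_lessThan tp1_integral assms)
  moreover have "(\<Sum>\<eta>\<in>S. if (M + 2 * int t - 2 * int t') + \<eta> = 0 then c \<eta> else 0) =
     (if - (M + 2 * int t - 2 * int t') \<in> S then c (- (M + 2 * int t - 2 * int t')) else 0)" for t t'
  proof -
    have "(\<Sum>\<eta>\<in>S. if (M + 2 * int t - 2 * int t') + \<eta> = 0 then c \<eta> else 0) =
          (\<Sum>\<eta>\<in>S. if \<eta> = - (M + 2 * int t - 2 * int t') then c \<eta> else 0)"
      by (rule sum.cong) auto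
    then show ?thesis using assms by (simp add: sum.delta)
  qed
  moreover have "(\<Sum>t<L. \<Sum>t'<L. a * X t t') / l = a / l * (\<Sum>t<L. \<Sum>t'<L. X t t')"
    for a l :: complex and X :: "nat \<Rightarrow> nat \<Rightarrow> complex"
    by (simp add: sum_distrib_left sum_divide_distrib)
  ultimately show ?thesis unfolding eq by simp
qed


lemma telescope:
  "(\<Sum>k\<in>{-1..int K - 1}. lpmult chi k \<xi>) = chi (2 powr (- real K) * of_int \<xi>)"
proof (induction K)
  case 0
  then show ?case by (simp add: lpmult_def)
next
  case (Suc K)
  have set: "{-1..int (Suc K) - 1} = insert (int K) {-1..int K - 1}" by auto
  have "(\<Sum>k\<in>{-1..int (Suc K) - 1}. lpmult chi k \<xi>) = lpmult chi (int K) \<xi> + (\<Sum>k\<in>{-1..int K - 1}. lpmult chi k \<xi>)"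
    unfolding set by (subst sum.insert) auto
  also have "\<dots> = chi (2 powr (- real (Suc K)) * of_int \<xi>)"
  proof -
    have p: "2 powr (- real (Suc K)) = 2 powr (- real K - 1)" by (rule arg_cong[where f="\<lambda>y. 2 powr y"]) simp
    also have "\<dots> = 2 powr (- real K) / 2" by (simp add: powr_diff)
    finally have q: "2 powr (- real (Suc K)) = 2 powr (- real K) / 2" .
    have e: "2 powr (- real K) * of_int \<xi> / 2 = 2 powr (- real (Suc K)) * of_int \<xi>"
      by (simp only: q)
    show ?thesis unfolding e[symmetric] using Suc.IH by (simp add: lpmult_def phi_lp_def)
  qed
  finally show ?case .
qed

definition hc :: "int \<Rightarrow> complex" where
  "hc \<xi> = per_fourier (\<lambda>x. complex_of_real (hsq x)) \<xi>"

definition SK :: "nat \<Rightarrow> int set" where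
  "SK K = {- (3 * 2 ^ K) .. 3 * 2 ^ K}"

definition fb :: "(real \<Rightarrow> real) \<Rightarrow> nat \<Rightarrow> int \<Rightarrow> complex" where
  "fb chi K \<xi> = of_real (chi (2 powr (- real K) * of_int \<xi>) / (2 * pi)) * hc \<xi>"

lemma fn_tp:
  assumes "admissible_chi chi"
  shows "f_n chi n x = tp (fb chi (n div 2)) (SK (n div 2)) x"
proof -
  define K where "K = n div 2"
  have "f_n chi n x = (\<Sum>k\<in>{-1..int K - 1}. Delta chi k (\<lambda>x. complex_of_real (hsq x)) x)"
    by (simp add: f_n_def S_lp_def K_def)
  also have "\<dots> = (\<Sum>k\<in>{-1..int K - 1}. tp (\<lambda>\<xi>. of_real (lpmult chi k \<xi> / (2 * pi)) * hc \<xi>) (SK K) x)"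
  proof (rule sum.cong[OF refl])
    fix k assume k: "k \<in> {-1..int K - 1}"
    show "Delta chi k (\<lambda>x. complex_of_real (hsq x)) x = tp (\<lambda>\<xi>. of_real (lpmult chi k \<xi> / (2 * pi)) * hc \<xi>) (SK K) x"
      unfolding hc_def
    proof (rule Delta_tp)
      show "-1 \<le> k" using k by auto
      show "finite (SK K)" by (simp add: SK_def)
      fix \<xi> assume "\<xi> \<notin> SK K"
      then have "3 * 2 ^ K \<le> \<bar>\<xi>\<bar>" by (auto simp: SK_def)
      then have "real_of_int (3 * 2 ^ K) \<le> real_of_int \<bar>\<xi>\<bar>" by (simp only: of_int_le_iff)
      then have "real_of_int \<bar>\<xi>\<bar> \<ge> 3 * 2 ^ K" by simp
      moreover have "2 powr real_of_int k \<le> 2 ^ K"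
      proof -
        have "2 powr real_of_int k \<le> 2 powr real K" using k by (intro powr_mono) auto
        then show ?thesis by (simp add: powr_realpow)
      qed
      ultimately show "lpmult chi k \<xi> = 0"
        using k by (intro mult_zero[OF assms]) auto
    qed
  qed
  also have "\<dots> = tp (\<lambda>\<xi>. \<Sum>k\<in>{-1..int K - 1}. of_real (lpmult chi k \<xi> / (2 * pi)) * hc \<xi>) (SK K) x"
    by (rule tp_sum[symmetric])
  also have "(\<lambda>\<xi>. \<Sum>k\<in>{-1..int K - 1}. of_real (lpmult chi k \<xi> / (2 * pi)) * hc \<xi>) = fb chi K"
    by (auto simp: fun_eq_iff fb_def telescope[symmetric] sum_distrib_right sum_divide_distrib)
  finally show ?thesis by (simp add: K_def)
qed



definition Aa :: "nat \<Rightarrow> real" where "Aa n = 2 powr (- real n) * real n powr (-2/5) * ln (real n)"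
definition ee :: "nat \<Rightarrow> real" where "ee n = real n powr (-1/5)"
definition ff :: "(real \<Rightarrow> real) \<Rightarrow> nat \<Rightarrow> real \<Rightarrow> complex" where
  "ff chi n = tp (fb chi (n div 2)) (SK (n div 2))"
definition fbd :: "(real \<Rightarrow> real) \<Rightarrow> nat \<Rightarrow> int \<Rightarrow> complex" where
  "fbd chi n \<xi> = \<i> * of_int \<xi> * fb chi (n div 2) \<xi>"
definition fD :: "(real \<Rightarrow> real) \<Rightarrow> nat \<Rightarrow> real \<Rightarrow> complex" where
  "fD chi n = tp (fbd chi n) (SK (n div 2))"
definition GG :: "(real \<Rightarrow> real) \<Rightarrow> nat \<Rightarrow> real \<Rightarrow> complex" where
  "GG chi n x = of_real (Aa n) * (of_real (- (2 ^ n) * sin (2 ^ n * x)) * (1 + of_real (ee n) * ff chi n x)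
                  + of_real (cos (2 ^ n * x)) * (of_real (ee n) * fD chi n x))"

lemma u0_eq: "admissible_chi chi \<Longrightarrow> u0 chi n = (\<lambda>x. of_real (Aa n * cos (2 ^ n * x)) * (1 + of_real (ee n) * ff chi n x))"
  by (auto simp: fun_eq_iff u0_def Aa_def ee_def ff_def fn_tp)

lemma u0_deriv:
  assumes "admissible_chi chi"
  shows "vector_derivative (u0 chi n) (at x) = GG chi n x"
proof (rule vector_derivative_at)
  have d1: "((\<lambda>x. of_real (Aa n * cos (2 ^ n * x))) has_vector_derivative
            of_real (Aa n * (- sin (2 ^ n * x) * 2 ^ n))) (at x)"
    by (rule has_vector_derivative_of_real) (auto intro!: derivative_eq_intros)
  have d2: "((\<lambda>x. 1 + of_real (ee n) * ff chi n x) has_vector_derivative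
            (0 + of_real (ee n) * fD chi n x)) (at x)"
    unfolding ff_def fD_def fbd_def
    by (intro has_vector_derivative_add has_vector_derivative_const has_vector_derivative_mult_right tp_vd)
       (simp add: SK_def)
  show "(u0 chi n has_vector_derivative GG chi n x) (at x)"
    unfolding u0_eq[OF assms]
    using has_vector_derivative_mult[OF d1 d2]
    by (simp add: GG_def algebra_simps)
qed

lemma alg_id:
  fixes e z f g Ac Nc ep :: complex
  assumes "e \<noteq> 0"
  shows "z * (Ac * ((\<i> * Nc * (e - 1/e) / 2) * (1 + ep * f) + ((e + 1/e)/2) * (ep * g)))\<^sup>2
   = Ac^2/4 * ( - (Nc^2) * (z*e*e + z/(e*e)) - 2*Nc^2*ep*(z*e*e * f + z/(e*e) * f)
      - Nc^2*ep^2*(z*e*e * f * f + z/(e*e) * f * f)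
      + 2*\<i>*Nc*ep*(z*e*e * g - z/(e*e) * g) + 2*\<i>*Nc*ep^2*(z*e*e * f * g - z/(e*e) * f * g)
      + ep^2*(z*e*e * g * g + z/(e*e) * g * g) + 2*Nc^2*z + 4*Nc^2*ep*(z * f)
      + 2*Nc^2*ep^2*(z * f * f) + 2*ep^2*(z * g * g))"
  using assms by (simp add: field_simps power2_eq_square)


lemma alg_id2:
  fixes e z f g Ac Nc ep zp zm :: complex
  assumes "e \<noteq> 0" "zp = z * e * e" "zm = z / (e * e)"
  shows "z * (Ac * ((\<i> * Nc * (e - 1/e) / 2) * (1 + ep * f) + ((e + 1/e)/2) * (ep * g)))\<^sup>2
   = Ac^2/4 * ( - (Nc^2) * (zp + zm) - 2*Nc^2*ep*(zp * f + zm * f)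
      - Nc^2*ep^2*(zp * f * f + zm * f * f)
      + 2*\<i>*Nc*ep*(zp * g - zm * g) + 2*\<i>*Nc*ep^2*(zp * f * g - zm * f * g)
      + ep^2*(zp * g * g + zm * g * g) + 2*Nc^2*z + 4*Nc^2*ep*(z * f)
      + 2*Nc^2*ep^2*(z * f * f) + 2*ep^2*(z * g * g))"
  using alg_id[OF assms(1), of z Ac Nc ep f g] assms(2,3) by simp

lemma Z0: "k \<noteq> 0 \<Longrightarrow> ((\<lambda>x. cis (x * of_int k)) has_integral 0) {-pi..pi}"
  using cis_integral[of k] by simp

lemma Z1:
  fixes a :: "int \<Rightarrow> complex"
  assumes "finite S" "\<And>\<eta>. \<eta> \<in> S \<Longrightarrow> k + \<eta> \<noteq> 0 \<or> a \<eta> = 0"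
  shows "((\<lambda>x. cis (x * of_int k) * tp a S x) has_integral 0) {-pi..pi}"
proof -
  have "(\<Sum>\<eta>\<in>S. if k + \<eta> = 0 then a \<eta> else 0) = 0"
    by (rule sum.neutral) (use assms(2) in auto)
  then show ?thesis using tp1_integral[OF assms(1), of k a] by simp
qed

lemma Z2:
  fixes a b :: "int \<Rightarrow> complex"
  assumes "finite S" "finite T" "\<And>\<eta> \<zeta>. \<eta> \<in> S \<Longrightarrow> \<zeta> \<in> T \<Longrightarrow> k + \<eta> + \<zeta> \<noteq> 0 \<or> a \<eta> * b \<zeta> = 0"
  shows "((\<lambda>x. cis (x * of_int k) * tp a S x * tp b T x) has_integral 0) {-pi..pi}"
proof -
  have "(\<Sum>\<eta>\<in>S. \<Sum>\<zeta>\<in>T. if k + \<eta> + \<zeta> = 0 then a \<eta> * b \<zeta> else 0) = 0"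
    by (intro sum.neutral ballI) (use assms(3) in auto)
  then show ?thesis using tp2_integral[OF assms(1,2), of k a b] by simp
qed

lemma fb_even: "even \<xi> \<Longrightarrow> fb chi K \<xi> = 0"
  by (simp add: fb_def hc_def hsq_fourier)

lemma fbd_even: "even \<xi> \<Longrightarrow> fbd chi n \<xi> = 0"
  by (simp add: fbd_def fb_even)

lemma Fhat_integral:
  assumes chi: "admissible_chi chi" and odd: "odd \<xi>" and xS: "\<xi> \<in> SK (n div 2)"
    and big: "\<bar>\<xi>\<bar> + 6 * 2 ^ (n div 2) < 2 * 2 ^ n"
  shows "((\<lambda>x. cis (- x * of_int \<xi>) * (GG chi n x)\<^sup>2) has_integral
      (of_real (2 * pi) * (of_real (Aa n)^2 * of_real (2 ^ n)^2 * of_real (ee n)) * fb chi (n div 2) \<xi>)) {-pi..pi}"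
proof -
  define K where "K = n div 2"
  define S where "S = SK K"
  define kp :: int where "kp = 2 * 2 ^ n - \<xi>"
  define km :: int where "km = - 2 * 2 ^ n - \<xi>"
  define k0 :: int where "k0 = - \<xi>"
  define Ac where "Ac = complex_of_real (Aa n)"
  define Nc where "Nc = complex_of_real (2 ^ n)"
  define ep where "ep = complex_of_real (ee n)"
  define C where "C k x = cis (x * of_int k)" for k x
  have fin: "finite S" by (simp add: S_def SK_def)
  have Sb: "\<bar>\<eta>\<bar> \<le> 3 * 2 ^ K" if "\<eta> \<in> S" for \<eta> using that by (auto simp: S_def SK_def)
  have pw: "cis (- x * of_int \<xi>) * (GG chi n x)\<^sup>2 =
     Ac^2/4 * ( - (Nc^2) * (C kp x + C km x) - 2*Nc^2*ep*(C kp x * ff chi n x + C km x * ff chi n x)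
      - Nc^2*ep^2*(C kp x * ff chi n x * ff chi n x + C km x * ff chi n x * ff chi n x)
      + 2*\<i>*Nc*ep*(C kp x * fD chi n x - C km x * fD chi n x)
      + 2*\<i>*Nc*ep^2*(C kp x * ff chi n x * fD chi n x - C km x * ff chi n x * fD chi n x)
      + ep^2*(C kp x * fD chi n x * fD chi n x + C km x * fD chi n x * fD chi n x) + 2*Nc^2*C k0 x
      + 4*Nc^2*ep*(C k0 x * ff chi n x)
      + 2*Nc^2*ep^2*(C k0 x * ff chi n x * ff chi n x) + 2*ep^2*(C k0 x * fD chi n x * fD chi n x))" for x
  proof -
    define e where "e = cis (2 ^ n * x)"
    have e0: "e \<noteq> 0" by (simp add: e_def)
    have ie: "1 / e = cis (- (2 ^ n * x))" by (simp add: e_def divide_inverse)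
    have cosE: "complex_of_real (cos (2 ^ n * x)) = (e + 1/e) / 2"
      unfolding ie unfolding e_def by (simp add: complex_eq_iff)
    have sinE: "complex_of_real (- (2 ^ n) * sin (2 ^ n * x)) = \<i> * Nc * (e - 1/e) / 2"
      unfolding ie unfolding e_def Nc_def by (simp add: complex_eq_iff)
    have G: "GG chi n x = Ac * ((\<i> * Nc * (e - 1/e) / 2) * (1 + ep * ff chi n x) + ((e + 1/e)/2) * (ep * fD chi n x))"
      unfolding GG_def cosE sinE Ac_def ep_def ..
    have z: "cis (- x * of_int \<xi>) = C k0 x" by (simp add: C_def k0_def)
    have zp: "C kp x = C k0 x * e * e" unfolding C_def e_def cis_mult
      by (rule arg_cong[where f=cis]) (simp add: kp_def k0_def algebra_simps)
    have zm: "C km x = C k0 x / (e * e)" unfolding C_def e_def cis_mult cis_divide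
      by (rule arg_cong[where f=cis]) (simp add: km_def k0_def algebra_simps)
    show ?thesis unfolding G z by (rule alg_id2[OF e0 zp zm])
  qed
  have xi0: "\<xi> \<noteq> 0" using odd by auto
  have kbig: "\<bar>\<xi>\<bar> + 6 * 2 ^ K < 2 * 2 ^ n" using big by (simp add: K_def)
  have ff_eq: "ff chi n = tp (fb chi K) S" by (simp add: ff_def K_def S_def)
  have fD_eq: "fD chi n = tp (fbd chi n) S" by (simp add: fD_def K_def S_def)
  have p1: "kp + \<eta> \<noteq> 0" if "\<eta> \<in> S" for \<eta> using Sb[OF that] kbig by (simp add: kp_def)
  have m1: "km + \<eta> \<noteq> 0" if "\<eta> \<in> S" for \<eta> using Sb[OF that] kbig by (simp add: km_def)
  have p2: "kp + \<eta> + \<zeta> \<noteq> 0" if "\<eta> \<in> S" "\<zeta> \<in> S" for \<eta> \<zeta>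
    using Sb[OF that(1)] Sb[OF that(2)] kbig by (simp add: kp_def)
  have m2: "km + \<eta> + \<zeta> \<noteq> 0" if "\<eta> \<in> S" "\<zeta> \<in> S" for \<eta> \<zeta>
    using Sb[OF that(1)] Sb[OF that(2)] kbig by (simp add: km_def)
  have par: "k0 + \<eta> + \<zeta> \<noteq> 0 \<or> even \<eta> \<or> even \<zeta>" for \<eta> \<zeta>
  proof (cases "k0 + \<eta> + \<zeta> = 0")
    case True
    then have "\<eta> = \<xi> - \<zeta>" by (simp add: k0_def)
    then show ?thesis using odd by auto
  qed simp
  have pK: "(0::int) < 2 ^ K" by simp
  have kp0: "kp \<noteq> 0" using kbig pK unfolding kp_def by arith
  have km0: "km \<noteq> 0" using kbig pK unfolding km_def by arith
  have k00: "k0 \<noteq> 0" using xi0 by (simp add: k0_def)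
  note defs = C_def ff_eq fD_eq
  have i_p0: "(C kp has_integral 0) {-pi..pi}" unfolding C_def[abs_def] by (rule Z0[OF kp0])
  have i_m0: "(C km has_integral 0) {-pi..pi}" unfolding C_def[abs_def] by (rule Z0[OF km0])
  have i_00: "(C k0 has_integral 0) {-pi..pi}" unfolding C_def[abs_def] by (rule Z0[OF k00])
  have i_pf: "((\<lambda>x. C kp x * ff chi n x) has_integral 0) {-pi..pi}" unfolding defs by (rule Z1[OF fin]) (use p1 in auto)
  have i_mf: "((\<lambda>x. C km x * ff chi n x) has_integral 0) {-pi..pi}" unfolding defs by (rule Z1[OF fin]) (use m1 in auto)
  have i_pg: "((\<lambda>x. C kp x * fD chi n x) has_integral 0) {-pi..pi}" unfolding defs by (rule Z1[OF fin]) (use p1 in auto)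
  have i_mg: "((\<lambda>x. C km x * fD chi n x) has_integral 0) {-pi..pi}" unfolding defs by (rule Z1[OF fin]) (use m1 in auto)
  have i_pff: "((\<lambda>x. C kp x * ff chi n x * ff chi n x) has_integral 0) {-pi..pi}" unfolding defs by (rule Z2[OF fin fin]) (use p2 in auto)
  have i_mff: "((\<lambda>x. C km x * ff chi n x * ff chi n x) has_integral 0) {-pi..pi}" unfolding defs by (rule Z2[OF fin fin]) (use m2 in auto)
  have i_pfg: "((\<lambda>x. C kp x * ff chi n x * fD chi n x) has_integral 0) {-pi..pi}" unfolding defs by (rule Z2[OF fin fin]) (use p2 in auto)
  have i_mfg: "((\<lambda>x. C km x * ff chi n x * fD chi n x) has_integral 0) {-pi..pi}" unfolding defs by (rule Z2[OF fin fin]) (use m2 in auto)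
  have i_pgg: "((\<lambda>x. C kp x * fD chi n x * fD chi n x) has_integral 0) {-pi..pi}" unfolding defs by (rule Z2[OF fin fin]) (use p2 in auto)
  have i_mgg: "((\<lambda>x. C km x * fD chi n x * fD chi n x) has_integral 0) {-pi..pi}" unfolding defs by (rule Z2[OF fin fin]) (use m2 in auto)
  have i_0ff: "((\<lambda>x. C k0 x * ff chi n x * ff chi n x) has_integral 0) {-pi..pi}" unfolding defs
    by (rule Z2[OF fin fin]) (metis fb_even par mult_eq_0_iff)
  have i_0gg: "((\<lambda>x. C k0 x * fD chi n x * fD chi n x) has_integral 0) {-pi..pi}" unfolding defs
    by (rule Z2[OF fin fin]) (metis fbd_even par mult_eq_0_iff)
  have i_0f: "((\<lambda>x. C k0 x * ff chi n x) has_integral (of_real (2 * pi) * fb chi K \<xi>)) {-pi..pi}"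
  proof -
    have "(\<Sum>\<eta>\<in>S. if k0 + \<eta> = 0 then fb chi K \<eta> else 0) = (\<Sum>\<eta>\<in>S. if \<eta> = \<xi> then fb chi K \<eta> else 0)"
      by (rule sum.cong) (auto simp: k0_def)
    also have "\<dots> = fb chi K \<xi>" using xS fin by (simp add: S_def K_def)
    finally show ?thesis unfolding defs using tp1_integral[OF fin, of k0 "fb chi K"] by simp
  qed
  have "((\<lambda>x. Ac^2/4 * ( - (Nc^2) * (C kp x + C km x) - 2*Nc^2*ep*(C kp x * ff chi n x + C km x * ff chi n x)
      - Nc^2*ep^2*(C kp x * ff chi n x * ff chi n x + C km x * ff chi n x * ff chi n x)
      + 2*\<i>*Nc*ep*(C kp x * fD chi n x - C km x * fD chi n x)
      + 2*\<i>*Nc*ep^2*(C kp x * ff chi n x * fD chi n x - C km x * ff chi n x * fD chi n x)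
      + ep^2*(C kp x * fD chi n x * fD chi n x + C km x * fD chi n x * fD chi n x) + 2*Nc^2*C k0 x
      + 4*Nc^2*ep*(C k0 x * ff chi n x)
      + 2*Nc^2*ep^2*(C k0 x * ff chi n x * ff chi n x) + 2*ep^2*(C k0 x * fD chi n x * fD chi n x)))
    has_integral (Ac^2/4 * ( - (Nc^2) * (0 + 0) - 2*Nc^2*ep*(0 + 0) - Nc^2*ep^2*(0 + 0)
      + 2*\<i>*Nc*ep*(0 - 0) + 2*\<i>*Nc*ep^2*(0 - 0) + ep^2*(0 + 0) + 2*Nc^2*0
      + 4*Nc^2*ep*(of_real (2 * pi) * fb chi K \<xi>) + 2*Nc^2*ep^2*0 + 2*ep^2*0))) {-pi..pi}"
    by (intro has_integral_mult_right has_integral_add has_integral_diff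
          i_p0 i_m0 i_00 i_pf i_mf i_pg i_mg i_pff i_mff i_pfg i_mfg i_pgg i_mgg i_0ff i_0gg i_0f)
  then show ?thesis unfolding pw[abs_def] by (simp add: Ac_def Nc_def ep_def K_def algebra_simps)
qed



lemma scal:
  assumes "n > 0"
  shows "(Aa n)^2 * (2 ^ n)^2 * ee n = (ln (real n))^2 / real n"
proof -
  have a: "(2 powr (- real n))^2 * (2 ^ n)^2 = (1::real)"
    by (simp add: powr_minus powr_realpow power_mult_distrib[symmetric])
  have b: "(real n powr (-2/5))^2 * real n powr (-1/5) = 1 / real n"
  proof -
    have "(real n powr (-2/5))^2 * real n powr (-1/5) = real n powr (-2/5 + -2/5 + -1/5)"
      using assms by (simp only: power2_eq_square powr_add)
    also have "\<dots> = real n powr (-1)" by simp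
    also have "\<dots> = 1 / real n" using assms by (simp add: powr_minus divide_inverse)
    finally show ?thesis .
  qed
  have "(Aa n)^2 * (2 ^ n)^2 * ee n
        = ((2 powr (- real n))^2 * (2 ^ n)^2) * ((real n powr (-2/5))^2 * real n powr (-1/5)) * (ln (real n))^2"
    by (simp add: Aa_def ee_def power_mult_distrib)
  also have "\<dots> = (ln (real n))^2 / real n" using a b by simp
  finally show ?thesis .
qed


lemma main_j:
  assumes chi: "admissible_chi chi" and j5: "j \<ge> 5" and jK: "2 * j \<le> n div 2"
  shows "Linf (Delta chi (int j) (\<lambda>x. (vector_derivative (u0 chi n) (at x))\<^sup>2))
           \<ge> (ln (real n))\<^sup>2 / (48 * pi * real n)"
proof -
  define K where "K = n div 2"
  define F where "F = (\<lambda>x. (GG chi n x)\<^sup>2)"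
  have Feq: "(\<lambda>x. (vector_derivative (u0 chi n) (at x))\<^sup>2) = F"
    using u0_deriv[OF chi] by (simp add: F_def)
  define L :: nat where "L = 2 ^ (j - 5)"
  have L0: "L > 0" by (simp add: L_def)
  have jL: "(2::nat) ^ j = 32 * L"
  proof -
    have "(2::nat) ^ j = 2 ^ (5 + (j - 5))" using j5 by simp
    also have "\<dots> = 32 * L" by (simp add: power_add L_def)
    finally show ?thesis .
  qed
  have jLr: "(2::real) ^ j = 32 * real L" using arg_cong[OF jL, of real] by simp
  have jLi: "(2::int) ^ j = 32 * int L" using arg_cong[OF jL, of int] by simp
  define M :: int where "M = 46 * int L - 1"
  define kk where "kk t t' = M + 2 * int t - 2 * int t'" for t t' :: nat
  have kb: "44 * int L + 1 \<le> kk t t' \<and> kk t t' \<le> 48 * int L - 3" if "t < L" "t' < L" for t t'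
    using that by (auto simp: kk_def M_def)
  have kbr: "44 * real L + 1 \<le> real_of_int (kk t t') \<and> real_of_int (kk t t') \<le> 48 * real L - 3"
    if "t < L" "t' < L" for t t'
  proof -
    have "real_of_int (44 * int L + 1) \<le> real_of_int (kk t t')" "real_of_int (kk t t') \<le> real_of_int (48 * int L - 3)"
      using kb[OF that] by (simp_all only: of_int_le_iff)
    then show ?thesis by simp
  qed
  have kodd: "odd (kk t t')" for t t' by (simp add: kk_def M_def)
  have Kj: "K \<ge> j + 2" "K \<ge> 10" using jK j5 by (auto simp: K_def)
  have n0: "n > 0" using Kj by (auto simp: K_def)
  have K2: "(2::int) ^ K \<ge> 4 * 2 ^ j"
  proof -
    have "(2::int) ^ (j + 2) \<le> 2 ^ K" using Kj by (intro power_increasing) auto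
    then show ?thesis by (simp add: power_add)
  qed
  have K1024: "(2::int) ^ K \<ge> 1024"
  proof -
    have "(2::int) ^ 10 \<le> 2 ^ K" using Kj by (intro power_increasing) auto
    then show ?thesis by simp
  qed
  have nK: "(2::int) ^ n \<ge> 2 ^ K * 2 ^ K"
  proof -
    have "(2::int) ^ K * 2 ^ K = 2 ^ (K + K)" by (simp add: power_add)
    also have "\<dots> \<le> 2 ^ n" by (intro power_increasing) (auto simp: K_def)
    finally show ?thesis .
  qed
  have scal': "complex_of_real (Aa n) ^ 2 * complex_of_real (2 ^ n) ^ 2 * complex_of_real (ee n)
      = complex_of_real ((ln (real n))\<^sup>2 / real n)"
    using scal[OF n0] by (metis of_real_mult of_real_power)
  have Fhat: "per_fourier F (- kk t t') = complex_of_real ((ln (real n))\<^sup>2 / real n) * (2 * \<i> / of_int (kk t t'))"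
    if "t < L" "t' < L" for t t'
  proof -
    define \<xi> where "\<xi> = - kk t t'"
    have oddx: "odd \<xi>" using kodd by (simp add: \<xi>_def)
    have ab: "\<bar>\<xi>\<bar> \<le> 48 * int L" using kb[OF that] by (simp add: \<xi>_def)
    have "48 * int L \<le> 3 * 2 ^ K" using K2 jLi by simp
    then have xS: "\<xi> \<in> SK (n div 2)" using ab by (auto simp: SK_def K_def)
    have big: "\<bar>\<xi>\<bar> + 6 * 2 ^ (n div 2) < 2 * 2 ^ n"
    proof -
      have "48 * int L \<le> 2 ^ K" using K2 jLi by simp
      moreover have "2 ^ K * 1024 \<le> (2::int) ^ K * 2 ^ K" by (rule mult_left_mono) (use K1024 in auto)
      moreover have "(0::int) < 2 ^ K" by simp
      ultimately show ?thesis using ab nK unfolding K_def[symmetric] by linarith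
    qed
    have "per_fourier F \<xi> = of_real (2 * pi) * (of_real (Aa n)^2 * of_real (2 ^ n)^2 * of_real (ee n)) * fb chi K \<xi>"
      unfolding per_fourier_def F_def K_def by (rule integral_unique[OF Fhat_integral[OF chi oddx xS big]])
    also have "fb chi K \<xi> = of_real (1 / (2 * pi)) * (- 2 * \<i> / of_int \<xi>)"
    proof -
      have "\<bar>2 powr (- real K) * of_int \<xi>\<bar> < 3/4"
      proof -
        have p: "2 powr (- real K) = 1 / real_of_int (2 ^ K)" by (simp add: powr_minus powr_realpow divide_inverse)
        have r1: "real_of_int \<bar>\<xi>\<bar> \<le> 48 * real L" using ab by (metis of_int_le_iff of_int_mult of_int_numeral of_int_of_nat_eq)
        have r2: "real_of_int (2 ^ K) \<ge> 128 * real L" using K2 jLi by (metis (mono_tags) of_int_le_iff of_int_mult of_int_numeral of_int_of_nat_eq mult.assoc num_double numeral_times_numeral)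
        have "\<bar>2 powr (- real K) * of_int \<xi>\<bar> = real_of_int \<bar>\<xi>\<bar> / real_of_int (2 ^ K)" using p by (simp add: abs_mult)
        also have "\<dots> \<le> 48 * real L / (128 * real L)"
          using r1 r2 L0 by (intro frac_le) auto
        also have "\<dots> < 3/4" using L0 by simp
        finally show ?thesis .
      qed
      then have "chi (2 powr (- real K) * of_int \<xi>) = 1" by (rule chi_one[OF chi])
      then show ?thesis using oddx by (simp add: fb_def hc_def hsq_fourier)
    qed
    finally have "per_fourier F \<xi> = of_real (2 * pi) * (of_real (Aa n)^2 * of_real (2 ^ n)^2 * of_real (ee n)) *
        (of_real (1 / (2 * pi)) * (- 2 * \<i> / of_int \<xi>))" .
    then have "per_fourier F \<xi> = of_real (2 * pi) * complex_of_real ((ln (real n))\<^sup>2 / real n) *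
        (of_real (1 / (2 * pi)) * (- 2 * \<i> / of_int \<xi>))" by (simp only: scal')
    then show ?thesis by (simp add: \<xi>_def field_simps)
  qed
  define c where "c = (ln (real n))\<^sup>2 / real n"
  have c0: "c \<ge> 0" by (simp add: c_def)
  define cj where "cj \<xi> = of_real (lpmult chi (int j) \<xi> / (2 * pi)) * per_fourier F \<xi>" for \<xi>
  have Dl: "Delta chi (int j) F = tp cj (SK j)"
  proof
    fix x
    show "Delta chi (int j) F x = tp cj (SK j) x" unfolding cj_def
    proof (rule Delta_tp)
      show "finite (SK j)" by (simp add: SK_def)
      fix \<xi> assume "\<xi> \<notin> SK j"
      then have "3 * 2 ^ j \<le> \<bar>\<xi>\<bar>" by (auto simp: SK_def)
      then have "real_of_int (3 * 2 ^ j) \<le> real_of_int \<bar>\<xi>\<bar>" by (simp only: of_int_le_iff)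
      then have "real_of_int \<bar>\<xi>\<bar> \<ge> 3 * 2 powr real_of_int (int j)" by (simp add: powr_realpow)
      then show "lpmult chi (int j) \<xi> = 0" by (intro mult_zero[OF chi]) auto
    qed simp
  qed
  have cont: "continuous_on {-pi..pi} (Delta chi (int j) F)" by (simp add: Dl tp_cont)
  have lp1: "lpmult chi (int j) (- kk t t') = 1" if "t < L" "t' < L" for t t'
  proof -
    have p0: "2 powr (- real_of_int (int j)) = 1 / 2 powr (real j)" by (simp add: powr_minus_divide)
    have p1: "2 powr real j = 32 * real L" using jLr by (simp add: powr_realpow)
    have p: "2 powr (- real_of_int (int j)) = 1 / (32 * real L)" by (simp only: p0 p1)
    have pr: "2 powr (- real j) = 1 / (32 * real L)" using p by simp
    define a where "a = 2 powr (- real_of_int (int j)) * of_int (- kk t t')"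
    have aa: "\<bar>a\<bar> = real_of_int (kk t t') / (32 * real L)"
      using kbr[OF that] L0 by (simp add: a_def pr abs_mult)
    have "\<bar>a\<bar> \<ge> 4/3"
    proof -
      have "4/3 \<le> (44 * real L + 1) / (32 * real L)" using L0 by (simp add: field_simps)
      also have "\<dots> \<le> real_of_int (kk t t') / (32 * real L)" using kbr[OF that] L0 by (intro divide_right_mono) auto
      finally show ?thesis using aa by simp
    qed
    then have z: "chi a = 0" by (rule chi_zero[OF chi])
    have "\<bar>a / 2\<bar> < 3/4"
    proof -
      have "real_of_int (kk t t') / (32 * real L) \<le> (48 * real L - 3) / (32 * real L)"
        using kbr[OF that] L0 by (intro divide_right_mono) auto
      also have "\<dots> < 3/2" using L0 by (simp add: field_simps)
      finally show ?thesis using aa by simp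
    qed
    then have o: "chi (a / 2) = 1" by (rule chi_one[OF chi])
    show ?thesis using z o by (simp add: lpmult_def phi_lp_def a_def)
  qed
  have inS: "- kk t t' \<in> SK j" if "t < L" "t' < L" for t t'
    using kb[OF that] jLi by (auto simp: SK_def)
  define R where "R = (\<Sum>t<L. \<Sum>t'<L. 1 / real_of_int (kk t t'))"
  have summand: "(if - (M + 2 * int t - 2 * int t') \<in> SK j then cj (- (M + 2 * int t - 2 * int t')) else 0)
      = complex_of_real (c / pi) * \<i> * complex_of_real (1 / real_of_int (kk t t'))" if "t < L" "t' < L" for t t'
  proof -
    have e: "- (M + 2 * int t - 2 * int t') = - kk t t'" by (simp add: kk_def)
    show ?thesis unfolding e using inS[OF that] lp1[OF that] Fhat[OF that]
      by (simp add: cj_def c_def field_simps)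
  qed
  have sumv: "(\<Sum>t<L. \<Sum>t'<L. if - (M + 2 * int t - 2 * int t') \<in> SK j then cj (- (M + 2 * int t - 2 * int t')) else 0)
      = complex_of_real (c / pi) * \<i> * complex_of_real R"
  proof -
    have "(\<Sum>t<L. \<Sum>t'<L. if - (M + 2 * int t - 2 * int t') \<in> SK j then cj (- (M + 2 * int t - 2 * int t')) else 0)
        = (\<Sum>t<L. \<Sum>t'<L. complex_of_real (c / pi) * \<i> * complex_of_real (1 / real_of_int (kk t t')))"
      by (rule sum.cong[OF refl], rule sum.cong[OF refl], rule summand) auto
    also have "\<dots> = complex_of_real (c / pi) * \<i> * complex_of_real R"
      by (simp add: R_def sum_distrib_left)
    finally show ?thesis .
  qed
  define P where "P = of_real (2 * pi) / of_nat L * (complex_of_real (c / pi) * \<i> * complex_of_real R)"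
  have pair: "((\<lambda>x. Delta chi (int j) F x * wD L M x) has_integral P) {-pi..pi}"
    unfolding P_def sumv[symmetric] Dl by (rule tp_wD_integral) (simp add: SK_def)
  have le: "cmod P \<le> Linf (Delta chi (int j) F) * (2 * pi)"
    by (rule linf_pair[OF cont pair wD_norm_integral[OF L0]])
  have R0: "R \<ge> real L / 48"
  proof -
    have "(\<Sum>t<L. \<Sum>t'<L. 1 / (48 * real L)) \<le> R"
      unfolding R_def
    proof (intro sum_mono)
      fix t t' assume "t \<in> {..<L}" "t' \<in> {..<L}"
      then have "44 * real L + 1 \<le> real_of_int (kk t t') \<and> real_of_int (kk t t') \<le> 48 * real L - 3"
        using kbr by auto
      then show "1 / (48 * real L) \<le> 1 / real_of_int (kk t t')" using L0
        by (intro divide_left_mono) auto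
    qed
    then show ?thesis using L0 by (simp add: field_simps)
  qed
  have cmP: "cmod P = 2 * c * R / real L"
  proof -
    have "P = \<i> * complex_of_real (2 * c * R / real L)" by (simp add: P_def field_simps)
    then have "cmod P = \<bar>2 * c * R / real L\<bar>" by (simp only: norm_mult norm_ii norm_of_real mult_1)
    moreover have "R \<ge> 0" using R0 by simp
    ultimately show ?thesis using c0 L0 by simp
  qed
  have "c / 24 \<le> 2 * c * R / real L"
  proof -
    have "2 * c * (real L / 48) \<le> 2 * c * R" using R0 c0 by (intro mult_left_mono) auto
    then show ?thesis using L0 by (simp add: field_simps)
  qed
  then have "c / 24 \<le> Linf (Delta chi (int j) F) * (2 * pi)" using le cmP by simp
  then have "c / (48 * pi) \<le> Linf (Delta chi (int j) F)" by (simp add: field_simps)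
  then show ?thesis by (simp add: Feq c_def mult.commute)
qed



theorem lemma3p3:
  fixes chi :: "real \<Rightarrow> real"
  assumes "admissible_chi chi"
  shows "\<exists>c>0. \<exists>N. \<forall>n\<ge>N. 16 dvd n \<longrightarrow>
           besov_trunc chi 0 (Nset n) (\<lambda>x. (vector_derivative (u0 chi n) (at x))\<^sup>2)
             \<ge> c * (ln (real n))\<^sup>2"
proof (intro exI[of _ "1 / (384 * pi)"] conjI exI[of _ "48::nat"] allI impI)
  show "0 < 1 / (384 * pi)" by simp
  fix n :: nat assume n48: "48 \<le> n" and d: "16 dvd n"
  obtain q where q: "n = 16 * q" using d by blast
  have q3: "q \<ge> 3" using n48 q by simp
  define B where "B = (ln (real n))\<^sup>2 / (48 * pi * real n)"
  have fin: "finite (Nset n)"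
  proof (rule finite_subset)
    show "Nset n \<subseteq> {..n}" by (auto simp: Nset_def)
  qed simp
  have jb: "2 * q \<le> j \<and> j \<le> 4 * q" if "j \<in> Nset n" for j
    using that q by (auto simp: Nset_def)
  have each: "B \<le> 2 ^ (0 * j) * Linf (Delta chi (int j) (\<lambda>x. (vector_derivative (u0 chi n) (at x))\<^sup>2))"
    if "j \<in> Nset n" for j
  proof -
    have "j \<ge> 5" "2 * j \<le> n div 2" using jb[OF that] q3 q by auto
    then show ?thesis using main_j[OF assms] by (simp add: B_def)
  qed
  have sub: "{2 * q .. 4 * q} \<subseteq> Nset n"
    using q by (auto simp: Nset_def)
  have card: "real (card (Nset n)) \<ge> 2 * real q"
  proof -
    have "card {2 * q .. 4 * q} \<le> card (Nset n)" by (rule card_mono[OF fin sub])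
    then show ?thesis by simp
  qed
  have "real (card (Nset n)) * B \<le> besov_trunc chi 0 (Nset n) (\<lambda>x. (vector_derivative (u0 chi n) (at x))\<^sup>2)"
    unfolding besov_trunc_def using sum_mono[OF each] by simp
  moreover have "1 / (384 * pi) * (ln (real n))\<^sup>2 \<le> real (card (Nset n)) * B"
  proof -
    have B0: "B \<ge> 0" by (simp add: B_def)
    have "1 / (384 * pi) * (ln (real n))\<^sup>2 = 2 * real q * B"
      using q q3 by (simp add: B_def field_simps)
    also have "\<dots> \<le> real (card (Nset n)) * B" using card B0 by (intro mult_right_mono) auto
    finally show ?thesis .
  qed
  ultimately show "1 / (384 * pi) * (ln (real n))\<^sup>2 \<le>
      besov_trunc chi 0 (Nset n) (\<lambda>x. (vector_derivative (u0 chi n) (at x))\<^sup>2)" by linarith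
qed


end
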